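(* Let $d,n$ be positive integers with $d\leq n^2/4$. Then $$p_d(n)<4e^{cn}n^{n+2\sqrt{d}}\max\{2^{-n},(2n)^{-\sqrt{d}}\}\qquad\text{with } c=\frac{3}{2e}+1.$$ Consequently, if $d=d(n)$ satisfies $dn^{-2}\to 0$ as $n\to\infty$, then $p_d(n)\leq n^{n+o(n)}$.
   Context: $\mathbb{Z}_+=\{0,1,2,\dots\}$. A set $S\subset\mathbb{Z}_+^d$ is a lower set if whenever $\mathbf{x}\in S$ and $\mathbf{x}'\in\mathbb{Z}_+^d$ satisfies $x'_i\leq x_i$ for all $i$, then $\mathbf{x}'\in S$. $p_d(n)$ denotes the number of lower sets in $\mathbb{Z}_+^d$ with exactly $n$ points. *)

theory Defs
  imports "HOL-Analysis.Analysis"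
begin

text \<open>Points of Z_+^d are represented as lists of naturals of length d.\<close>

definition lower_set :: "nat \<Rightarrow> nat list set \<Rightarrow> bool" where
  "lower_set d S \<longleftrightarrow> S \<subseteq> {x. length x = d} \<and>
     (\<forall>x\<in>S. \<forall>x'. length x' = d \<and> (\<forall>i<d. x' ! i \<le> x ! i) \<longrightarrow> x' \<in> S)"

definition p :: "nat \<Rightarrow> nat \<Rightarrow> nat" where
  "p d n = card {S. lower_set d S \<and> finite S \<and> card S = n}"

end

theory Submission
  imports Defs "HOL-Library.List_Lexorder" "HOL-Real_Asymp.Real_Asymp"
begin


definition zv :: "nat \<Rightarrow> nat list" where "zv d = replicate d 0"
definition ev :: "nat \<Rightarrow> nat \<Rightarrow> nat list" where "ev d i = (replicate d 0)[i := 1]"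
definition rk :: "nat list set \<Rightarrow> nat list \<Rightarrow> nat" where "rk S x = card {y\<in>S. y < x}"
definition pidx :: "nat list \<Rightarrow> nat" where "pidx x = (LEAST i. 0 < x ! i)"
definition par :: "nat list \<Rightarrow> nat list" where "par x = x[pidx x := x ! pidx x - 1]"
definition code :: "nat list set \<Rightarrow> nat list \<Rightarrow> nat \<times> nat" where
  "code S x = (if par x = zv (length x) then (0, pidx x)
               else (rk S (par x), rk S (ev (length x) (pidx x))))"

lemma pw_less:
  fixes x y :: "nat list"
  assumes "length x = length y" "\<forall>i<length y. x ! i \<le> y ! i" "x \<noteq> y"
  shows "x < y"
  using assms
proof (induction x arbitrary: y)
  case Nil then show ?case by simp
next
  case (Cons a x)
  then obtain b y' where y: "y = b # y'" by (cases y) auto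
  have ab: "a \<le> b" using Cons.prems(2) y by force
  have le': "\<forall>i<length y'. x ! i \<le> y' ! i"
  proof (intro allI impI)
    fix i assume "i < length y'"
    then show "x ! i \<le> y' ! i" using Cons.prems(2)[rule_format, of "Suc i"] y by simp
  qed
  show ?case
  proof (cases "a = b")
    case True
    then have "x \<noteq> y'" using Cons.prems(3) y by simp
    then have "x < y'" using Cons.IH[of y'] Cons.prems(1) y le' by simp
    then show ?thesis using y True by simp
  next
    case False then show ?thesis using ab y by simp
  qed
qed

lemma lower_mem: "lower_set d S \<Longrightarrow> x \<in> S \<Longrightarrow> length y = d \<Longrightarrow> (\<forall>i<d. y ! i \<le> x ! i) \<Longrightarrow> y \<in> S"
  unfolding lower_set_def by blast

lemma lower_len: "lower_set d S \<Longrightarrow> x \<in> S \<Longrightarrow> length x = d"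
  unfolding lower_set_def by blast

lemma zv_mem: "lower_set d S \<Longrightarrow> x \<in> S \<Longrightarrow> zv d \<in> S"
  by (rule lower_mem) (auto simp: zv_def)

lemma zv_less: "length x = d \<Longrightarrow> x \<noteq> zv d \<Longrightarrow> zv d < x"
  by (rule pw_less) (auto simp: zv_def)

lemma not_less_zv: "length x = d \<Longrightarrow> \<not> x < zv d"
  using zv_less by (metis less_asym less_irrefl)

lemma pidx:
  assumes "length x = d" "x \<noteq> zv d"
  shows "pidx x < d" "0 < x ! pidx x"
proof -
  have "\<exists>i<d. 0 < x ! i"
  proof (rule ccontr)
    assume "\<not> ?thesis"
    then have "x = zv d" using assms(1) by (intro nth_equalityI) (auto simp: zv_def)
    then show False using assms(2) by simp
  qed
  then obtain i where i: "i < d" "0 < x ! i" by blast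
  show "0 < x ! pidx x" unfolding pidx_def by (rule LeastI[of _ i]) (rule i(2))
  have "pidx x \<le> i" unfolding pidx_def by (rule Least_le) (rule i(2))
  then show "pidx x < d" using i by simp
qed

lemma par_len [simp]: "length (par x) = length x"
  by (simp add: par_def)

lemma par_nth: "j < length x \<Longrightarrow> par x ! j = (if j = pidx x then x ! j - 1 else x ! j)"
  by (simp add: par_def nth_list_update)

lemma par_props:
  assumes "length x = d" "x \<noteq> zv d"
  shows "\<forall>j<d. par x ! j \<le> x ! j" "par x \<noteq> x" "par x < x"
    "x = (par x)[pidx x := par x ! pidx x + 1]"
proof -
  note P = pidx[OF assms]
  show 1: "\<forall>j<d. par x ! j \<le> x ! j" using assms(1) by (auto simp: par_nth)
  show 2: "par x \<noteq> x"
  proof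
    assume "par x = x"
    then have "par x ! pidx x = x ! pidx x" by simp
    then show False using P assms(1) by (simp add: par_nth)
  qed
  show "par x < x" using 1 2 assms(1) by (intro pw_less) auto
  show "x = (par x)[pidx x := par x ! pidx x + 1]"
    using P assms(1) by (intro nth_equalityI) (auto simp: par_nth nth_list_update)
qed

lemma ev_len [simp]: "length (ev d i) = d"
  by (simp add: ev_def)

lemma ev_nth: "i < d \<Longrightarrow> j < d \<Longrightarrow> ev d i ! j = (if j = i then 1 else 0)"
  by (simp add: ev_def nth_list_update)

lemma ev_ne_zv: "i < d \<Longrightarrow> ev d i \<noteq> zv d"
proof
  assume "i < d" "ev d i = zv d"
  then have "ev d i ! i = zv d ! i" by simp
  then show False using \<open>i < d\<close> by (simp add: ev_nth zv_def)
qed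

lemma ev_inj:
  assumes "i < d" "i' < d" "ev d i = ev d i'"
  shows "i = i'"
proof (rule ccontr)
  assume ne: "i \<noteq> i'"
  have "ev d i ! i = ev d i' ! i" using assms(3) by simp
  then show False using assms(1,2) ne by (simp add: ev_nth)
qed

lemma ev_below: "length x = d \<Longrightarrow> i < d \<Longrightarrow> 0 < x ! i \<Longrightarrow> \<forall>j<d. ev d i ! j \<le> x ! j"
  by (auto simp: ev_nth)

lemma ev_ne_x:
  assumes "length x = d" "x \<noteq> zv d" "par x \<noteq> zv d"
  shows "ev d (pidx x) \<noteq> x"
proof
  assume e: "ev d (pidx x) = x"
  define i where "i = pidx x"
  have i: "i < d" using pidx[OF assms(1,2)] i_def by simp
  have xn: "\<And>j. j < d \<Longrightarrow> x ! j = (if j = i then 1 else 0)"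
    using e i ev_nth[OF i] i_def by metis
  have "par x = zv d"
  proof (rule nth_equalityI)
    show "length (par x) = length (zv d)" using assms by (simp add: zv_def)
    fix j assume "j < length (par x)"
    then show "par x ! j = zv d ! j" using assms xn[of j] i_def
      by (cases "j = i") (simp_all add: par_nth zv_def)
  qed
  then show False using assms(3) by simp
qed

lemma ev_less:
  assumes "length x = d" "x \<noteq> zv d" "par x \<noteq> zv d"
  shows "ev d (pidx x) < x"
  using ev_below[OF assms(1) pidx[OF assms(1,2)]] ev_ne_x[OF assms] assms(1)
  by (intro pw_less) auto

lemma rk_less:
  assumes "finite S" "y \<in> S" "y < x"
  shows "rk S y < rk S x"
  unfolding rk_def
proof (rule psubset_card_mono)
  show "finite {w \<in> S. w < x}" using assms(1) by simp
  show "{w \<in> S. w < y} \<subset> {w \<in> S. w < x}" using assms by auto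
qed

lemma rk_inj:
  assumes "finite S" "x \<in> S" "y \<in> S" "rk S x = rk S y"
  shows "x = y"
  using rk_less[OF assms(1,2), of y] rk_less[OF assms(1,3), of x] assms(4)
  by (metis less_irrefl neqE)

lemma rk_lt_card:
  assumes "finite S" "x \<in> S"
  shows "rk S x < card S"
  unfolding rk_def using assms by (intro psubset_card_mono) auto

lemma rk_pos:
  assumes "lower_set d S" "finite S" "x \<in> S" "x \<noteq> zv d"
  shows "0 < rk S x"
proof -
  have "zv d \<in> S" using zv_mem assms by blast
  moreover have "zv d < x" using zv_less lower_len assms by blast
  ultimately show ?thesis using rk_less[OF assms(2)] by fastforce
qed

lemma rk_agree:
  assumes "\<forall>w. w < x \<longrightarrow> (w \<in> S \<longleftrightarrow> w \<in> S')" "v < x"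
  shows "rk S v = rk S' v"
proof -
  have "{y\<in>S. y < v} = {y\<in>S'. y < v}" using assms by (auto dest: less_trans)
  then show ?thesis by (simp add: rk_def)
qed


lemma par_mem:
  assumes "lower_set d S" "x \<in> S" "x \<noteq> zv d"
  shows "par x \<in> S"
  using lower_mem[OF assms(1,2)] par_props(1)[OF lower_len[OF assms(1,2)] assms(3)]
    lower_len[OF assms(1,2)] by simp

lemma ev_mem:
  assumes "lower_set d S" "x \<in> S" "x \<noteq> zv d"
  shows "ev d (pidx x) \<in> S"
  using lower_mem[OF assms(1,2)] ev_below[OF lower_len[OF assms(1,2)] pidx[OF lower_len[OF assms(1,2)] assms(3)]]
  by simp

lemma code_decode:
  assumes L: "lower_set d S" "lower_set d S'" "finite S" "finite S'"
    and x: "x \<in> S" "x \<noteq> zv d" and x': "x' \<in> S'" "x' \<noteq> zv d"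
    and eq: "code S' x' = code S x"
    and agree: "\<forall>w. w < x \<longrightarrow> (w \<in> S \<longleftrightarrow> w \<in> S')"
  shows "x' = x"
proof -
  have lx: "length x = d" using lower_len L x by blast
  have lx': "length x' = d" using lower_len L x' by blast
  define p where "p = par x"
  define i where "i = pidx x"
  define p' where "p' = par x'"
  define i' where "i' = pidx x'"
  have pS: "p \<in> S" unfolding p_def using par_mem L x by blast
  have px: "p < x" unfolding p_def using par_props(3)[OF lx x(2)] .
  have pS': "p \<in> S'" using agree px pS by blast
  have p'S': "p' \<in> S'" unfolding p'_def using par_mem L x' by blast
  have id: "i < d" unfolding i_def using pidx[OF lx x(2)] by simp
  have id': "i' < d" unfolding i'_def using pidx[OF lx' x'(2)] by simp
  have "p' = p \<and> i' = i"
  proof (cases "p = zv d")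
    case True
    then have cx: "code S x = (0, i)" by (simp add: code_def p_def i_def lx)
    show ?thesis
    proof (cases "p' = zv d")
      case True
      then have "code S' x' = (0, i')" by (simp add: code_def p'_def i'_def lx')
      then show ?thesis using cx eq True \<open>p = zv d\<close> by simp
    next
      case False
      then have "code S' x' = (rk S' p', rk S' (ev d i'))" by (simp add: code_def p'_def i'_def lx')
      moreover have "0 < rk S' p'" using rk_pos[OF L(2,4) p'S' False] .
      ultimately show ?thesis using cx eq by simp
    qed
  next
    case False
    then have cx: "code S x = (rk S p, rk S (ev d i))" by (simp add: code_def p_def i_def lx)
    have rp: "0 < rk S p" using rk_pos[OF L(1,3) pS False] .
    have ne: "p' \<noteq> zv d"
    proof
      assume "p' = zv d"
      then have "code S' x' = (0, i')" by (simp add: code_def p'_def i'_def lx')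
      then show False using cx eq rp by simp
    qed
    then have cx': "code S' x' = (rk S' p', rk S' (ev d i'))" by (simp add: code_def p'_def i'_def lx')
    have "rk S p = rk S' p" using rk_agree[OF agree px] .
    then have "rk S' p' = rk S' p" using cx cx' eq by simp
    then have pp: "p' = p" using rk_inj[OF L(4) p'S' pS'] by simp
    have evS: "ev d i \<in> S" unfolding i_def using ev_mem L x by blast
    have evx: "ev d i < x" unfolding i_def using ev_less[OF lx x(2)] False p_def by simp
    have evS': "ev d i \<in> S'" using agree evx evS by blast
    have ev'S': "ev d i' \<in> S'" unfolding i'_def using ev_mem L x' by blast
    have "rk S (ev d i) = rk S' (ev d i)" using rk_agree[OF agree evx] .
    then have "rk S' (ev d i') = rk S' (ev d i)" using cx cx' eq by simp
    then have "ev d i' = ev d i" using rk_inj[OF L(4) ev'S' evS'] by simp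
    then have "i' = i" using ev_inj[OF id' id] by simp
    then show ?thesis using pp by simp
  qed
  then show ?thesis
    using par_props(4)[OF lx x(2)] par_props(4)[OF lx' x'(2)]
    unfolding p_def p'_def i_def i'_def by metis
qed

definition enc :: "nat \<Rightarrow> nat list set \<Rightarrow> (nat \<times> nat) set" where
  "enc d S = code S ` (S - {zv d})"

lemma enc_card:
  assumes "lower_set d S" "finite S" "card S = n" "0 < n"
  shows "card (enc d S) = n - 1"
proof -
  have "S \<noteq> {}" using assms by auto
  then obtain x where "x \<in> S" by blast
  then have z: "zv d \<in> S" using zv_mem assms(1) by blast
  have "inj_on (code S) (S - {zv d})"
    by (rule inj_onI) (use code_decode[OF assms(1) assms(1) assms(2) assms(2)] in blast)
  then have "card (enc d S) = card (S - {zv d})" unfolding enc_def by (rule card_image)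
  also have "\<dots> = n - 1" using z assms by (simp add: card_Diff_singleton)
  finally show ?thesis .
qed

lemma enc_sub:
  assumes "lower_set d S" "finite S" "card S = n"
  shows "enc d S \<subseteq> ({0} \<times> {..<d}) \<union> ({1..n-1} \<times> {1..n-1})"
proof
  fix c assume "c \<in> enc d S"
  then obtain x where x: "x \<in> S" "x \<noteq> zv d" and c: "c = code S x" unfolding enc_def by blast
  have lx: "length x = d" using lower_len assms x by blast
  show "c \<in> ({0} \<times> {..<d}) \<union> ({1..n-1} \<times> {1..n-1})"
  proof (cases "par x = zv d")
    case True
    then show ?thesis using c lx pidx[OF lx x(2)] by (simp add: code_def)
  next
    case False
    have pS: "par x \<in> S" using par_mem assms x by blast
    have evS: "ev d (pidx x) \<in> S" using ev_mem assms x by blast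
    have "rk S (par x) < rk S x" using rk_less[OF assms(2) pS par_props(3)[OF lx x(2)]] .
    moreover have "rk S x < n" using rk_lt_card[OF assms(2) x(1)] assms(3) by simp
    moreover have "0 < rk S (par x)" using rk_pos[OF assms(1,2) pS False] .
    moreover have "0 < rk S (ev d (pidx x))"
      using rk_pos[OF assms(1,2) evS ev_ne_zv[OF pidx(1)[OF lx x(2)]]] .
    moreover have "rk S (ev d (pidx x)) < n" using rk_lt_card[OF assms(2) evS] assms(3) by simp
    ultimately have "rk S (par x) \<in> {1..n-1}" "rk S (ev d (pidx x)) \<in> {1..n-1}" by auto
    then show ?thesis using c lx False by (simp add: code_def)
  qed
qed

lemma enc_inj_aux:
  assumes L: "lower_set d S" "lower_set d S'" "finite S" "finite S'"
    and e: "enc d S = enc d S'" and m: "m \<in> S" "m \<noteq> zv d"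
    and agree: "\<forall>w. w < m \<longrightarrow> (w \<in> S \<longleftrightarrow> w \<in> S')"
  shows "m \<in> S'"
proof -
  have "code S m \<in> enc d S'" using e m unfolding enc_def by blast
  then obtain x' where x': "x' \<in> S'" "x' \<noteq> zv d" "code S' x' = code S m" unfolding enc_def by force
  have "x' = m" using code_decode[OF L m x' agree] .
  then show ?thesis using x' by simp
qed

lemma enc_inj:
  assumes L: "lower_set d S" "lower_set d S'" "finite S" "finite S'" "S \<noteq> {}" "S' \<noteq> {}"
    and e: "enc d S = enc d S'"
  shows "S = S'"
proof (rule ccontr)
  assume ne: "S \<noteq> S'"
  define D where "D = (S - S') \<union> (S' - S)"
  have fD: "finite D" using L unfolding D_def by simp
  have neD: "D \<noteq> {}" using ne unfolding D_def by blast
  define m where "m = Min D"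
  have mD: "m \<in> D" unfolding m_def using Min_in[OF fD neD] .
  have agree: "\<forall>w. w < m \<longrightarrow> (w \<in> S \<longleftrightarrow> w \<in> S')"
  proof (intro allI impI)
    fix w assume "w < m"
    show "w \<in> S \<longleftrightarrow> w \<in> S'"
    proof (rule ccontr)
      assume "\<not> ?thesis"
      then have "w \<in> D" unfolding D_def by blast
      then have "m \<le> w" unfolding m_def using Min_le[OF fD] by blast
      then show False using \<open>w < m\<close> by simp
    qed
  qed
  have zS: "zv d \<in> S" using L zv_mem by blast
  have zS': "zv d \<in> S'" using L zv_mem by blast
  have mz: "m \<noteq> zv d" using mD zS zS' unfolding D_def by blast
  show False
  proof (cases "m \<in> S")
    case True
    then have "m \<in> S'" using enc_inj_aux[OF L(1-4) e _ mz agree] by blast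
    then show False using mD True unfolding D_def by blast
  next
    case False
    then have mS': "m \<in> S'" using mD unfolding D_def by blast
    have "m \<in> S" using enc_inj_aux[OF L(2,1,4,3) e[symmetric] mS' mz] agree by blast
    then show False using False by simp
  qed
qed

lemma p_le_binom:
  assumes "0 < n"
  shows "p d n \<le> (d + (n-1)*(n-1)) choose (n-1)"
proof -
  define F where "F = {S. lower_set d S \<and> finite S \<and> card S = n}"
  define U where "U = ({0} \<times> {..<d}) \<union> ({1..n-1} \<times> {1..n-1})"
  have fU: "finite U" unfolding U_def by simp
  have cU: "card U = d + (n-1)*(n-1)"
  proof -
    have "card U = card ({0::nat} \<times> {..<d}) + card ({1..n-1} \<times> {1..n-1})"
      unfolding U_def by (rule card_Un_disjoint) auto
    then show ?thesis by (simp add: card_cartesian_product)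
  qed
  have "card F \<le> card {P. P \<subseteq> U \<and> card P = n-1}"
  proof (rule card_inj_on_le[where f = "enc d"])
    show "inj_on (enc d) F"
    proof (rule inj_onI)
      fix S S' assume a: "S \<in> F" "S' \<in> F" "enc d S = enc d S'"
      then have "S \<noteq> {}" "S' \<noteq> {}" using assms unfolding F_def by auto
      then show "S = S'" using enc_inj[OF _ _ _ _ _ _ a(3)] a(1,2) unfolding F_def by blast
    qed
    show "enc d ` F \<subseteq> {P. P \<subseteq> U \<and> card P = n-1}"
      using enc_sub enc_card assms unfolding F_def U_def by blast
    show "finite {P. P \<subseteq> U \<and> card P = n-1}" using fU by simp
  qed
  also have "\<dots> = card U choose (n-1)" using n_subsets[OF fU] .
  finally show ?thesis unfolding p_def F_def using cU by simp
qed



lemma pow_fact_le_exp: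
  fixes x :: real
  assumes "0 \<le> x"
  shows "x ^ k / fact k \<le> exp x"
proof -
  have s: "(\<lambda>n. x^n /\<^sub>R fact n) sums exp x" by (rule exp_converges)
  have "sum (\<lambda>n. x^n /\<^sub>R fact n) {k} \<le> suminf (\<lambda>n. x^n /\<^sub>R fact n)"
    by (rule sum_le_suminf[OF sums_summable[OF s]]) (use assms in auto)
  then show ?thesis using sums_unique[OF s] by (simp add: divide_inverse mult.commute)
qed

lemma main_bound:
  assumes "0 < d" "2 \<le> n" "real d \<le> real n ^ 2 / 4"
  shows "real (p d n) \<le> exp (3/2 * real n) * real n ^ n"
proof -
  define N where "N = n - 1"
  have N1: "1 \<le> N" and nN: "real n = real N + 1" using assms(2) unfolding N_def by auto
  define K where "K = d + N * N"
  have "p d n \<le> K choose N" unfolding K_def N_def using p_le_binom assms(2) by simp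
  then have "real (p d n) \<le> real (K choose N)" by simp
  also have "\<dots> \<le> real K ^ N / fact N"
  proof -
    have "(K choose N) * fact N \<le> K ^ N" by (rule binomial_fact_pow)
    then have "real ((K choose N) * fact N) \<le> real (K ^ N)" by (simp only: of_nat_le_iff)
    then have "real (K choose N) * fact N \<le> real K ^ N" by simp
    then show ?thesis by (simp add: field_simps)
  qed
  also have "real K = real N * (real N + real d / real N)"
    using N1 unfolding K_def by (simp add: field_simps)
  also have "(real N * (real N + real d / real N)) ^ N / fact N
      = real N ^ N * ((real N + real d / real N) ^ N / fact N)"
    by (simp add: power_mult_distrib)
  also have "\<dots> \<le> real n ^ N * exp (real N + real d / real N)"
  proof (rule mult_mono)
    show "real N ^ N \<le> real n ^ N" using nN by (intro power_mono) auto
    show "(real N + real d / real N) ^ N / fact N \<le> exp (real N + real d / real N)"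
      by (rule pow_fact_le_exp) simp
  qed auto
  also have "\<dots> \<le> real n ^ n * exp (3/2 * real n)"
  proof (rule mult_mono)
    show "real n ^ N \<le> real n ^ n" using assms(2) unfolding N_def by (intro power_increasing) auto
    have "real d / real N \<le> real n / 2"
    proof -
      have "real n ^ 2 / 4 \<le> real n / 2 * real N" using nN N1 mult_mono[of 1 "real N" 1 "real N"] by (simp add: power2_eq_square field_simps)
      then have "real d \<le> real n / 2 * real N" using assms(3) by linarith
      then show ?thesis using N1 by (simp add: field_simps)
    qed
    then show "exp (real N + real d / real N) \<le> exp (3/2 * real n)" using nN by simp
  qed auto
  finally show ?thesis by (simp add: mult.commute)
qed

lemma c_ge: "3/2 \<le> 3 / (2 * exp 1) + (1::real)"
proof -
  have "exp 1 \<le> (3::real)" by (rule exp_le)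
  then have "1/2 \<le> 3 / (2 * exp (1::real))" by (simp add: field_simps)
  then show ?thesis by simp
qed

lemma part1:
  assumes "0 < d" "0 < n" "real d \<le> real n ^ 2 / 4"
  shows "real (p d n) < 4 * exp ((3 / (2 * exp 1) + 1) * real n)
              * real n powr (real n + 2 * sqrt (real d))
              * max (2 powr (- real n)) ((2 * real n) powr (- sqrt (real d)))"
proof -
  have n2: "2 \<le> n"
  proof (rule ccontr)
    assume "\<not> 2 \<le> n"
    then have "n = 1" using assms(2) by simp
    then show False using assms(1,3) by simp
  qed
  define c where "c = 3 / (2 * exp 1) + (1::real)"
  define s where "s = sqrt (real d)"
  have s0: "0 \<le> s" unfolding s_def by simp
  have rn: "(2::real) \<le> real n" using n2 by simp
  have npos: "0 < real n ^ n" using n2 by simp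
  have "real (p d n) \<le> exp (3/2 * real n) * real n ^ n" by (rule main_bound[OF assms(1) n2 assms(3)])
  also have "\<dots> \<le> exp (c * real n) * real n ^ n"
  proof -
    have "3/2 * real n \<le> c * real n" using c_ge unfolding c_def by (intro mult_right_mono) auto
    then show ?thesis by (intro mult_right_mono) auto
  qed
  also have "\<dots> < 4 * exp (c * real n) * real n ^ n" using npos by simp
  also have "real n ^ n \<le> real n powr (real n + 2 * s) * (2 * real n) powr (- s)"
  proof -
    define A where "A = real n powr s"
    define B where "B = (2::real) powr s"
    define X where "X = real n powr real n"
    have e1: "real n powr (real n + 2 * s) = X * A * A"
      unfolding X_def A_def by (simp only: mult_2 powr_add mult.assoc)
    have e2: "(2 * real n) powr (- s) = 1 / (B * A)"
      unfolding A_def B_def using rn by (simp add: powr_minus powr_mult divide_inverse)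
    have BA: "B \<le> A" unfolding A_def B_def using rn s0 by (intro powr_mono2) auto
    have B0: "0 < B" unfolding B_def by simp
    have X: "X = real n ^ n" unfolding X_def using rn by (simp add: powr_realpow)
    have X0: "0 < X" using X npos by simp
    have A0: "0 < A" using B0 BA by simp
    have eq: "X * A * A * (1 / (B * A)) = X * (A / B)" using B0 A0 by (simp add: field_simps)
    have le: "X \<le> X * (A / B)" using X0 B0 BA by (simp add: field_simps)
    show ?thesis unfolding e1 e2 using eq le X by simp
  qed
  also have "real n powr (real n + 2 * s) * (2 * real n) powr (- s)
      \<le> real n powr (real n + 2 * s) * max (2 powr (- real n)) ((2 * real n) powr (- s))"
    by (intro mult_left_mono) auto
  finally show ?thesis unfolding c_def s_def by (simp add: mult_left_mono mult.assoc)
qed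

lemma part2:
  fixes dd :: "nat \<Rightarrow> nat"
  assumes "\<forall>n. 0 < dd n" "(\<lambda>n. real (dd n) / real n ^ 2) \<longlonglongrightarrow> 0"
  shows "\<exists>g :: nat \<Rightarrow> real. ((\<lambda>n. g n / real n) \<longlonglongrightarrow> 0) \<and>
               (\<forall>\<^sub>F n in sequentially. real (p (dd n) n) \<le> real n powr (real n + g n))"
proof (intro exI conjI)
  define g where "g = (\<lambda>n::nat. 3/2 * real n / ln (real n))"
  show "(\<lambda>n. g n / real n) \<longlonglongrightarrow> 0" unfolding g_def by real_asymp
  have ev1: "\<forall>\<^sub>F n in sequentially. real (dd n) / real n ^ 2 < 1/4"
  proof -
    have "(0::real) < 1/4" by simp
    from order_tendstoD(2)[OF assms(2) this] show ?thesis .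
  qed
  have ev2: "\<forall>\<^sub>F n in sequentially. 2 \<le> n" by (rule eventually_ge_at_top)
  show "\<forall>\<^sub>F n in sequentially. real (p (dd n) n) \<le> real n powr (real n + g n)"
    using ev1 ev2
  proof eventually_elim
    case (elim n)
    have rn: "(2::real) \<le> real n" using elim by simp
    have "real (dd n) \<le> real n ^ 2 / 4" using elim(1) rn by (simp add: field_simps)
    then have "real (p (dd n) n) \<le> exp (3/2 * real n) * real n ^ n"
      using main_bound assms(1) elim(2) by blast
    also have "\<dots> = real n powr (real n + g n)"
    proof -
      have ln0: "0 < ln (real n)" using rn by simp
      have "real n powr g n = exp (3/2 * real n)"
        using rn ln0 by (simp add: powr_def g_def)
      moreover have "real n powr real n = real n ^ n" using rn by (simp add: powr_realpow)
      ultimately show ?thesis by (simp add: powr_add)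
    qed
    finally show ?case .
  qed
qed


theorem proposition2:
  shows "(\<forall>d n. 0 < d \<longrightarrow> 0 < n \<longrightarrow> real d \<le> real n ^ 2 / 4 \<longrightarrow>
            real (p d n) < 4 * exp ((3 / (2 * exp 1) + 1) * real n)
              * real n powr (real n + 2 * sqrt (real d))
              * max (2 powr (- real n)) ((2 * real n) powr (- sqrt (real d))))
       \<and> (\<forall>dd :: nat \<Rightarrow> nat. (\<forall>n. 0 < dd n) \<longrightarrow>
            ((\<lambda>n. real (dd n) / real n ^ 2) \<longlonglongrightarrow> 0) \<longrightarrow>
            (\<exists>g :: nat \<Rightarrow> real. ((\<lambda>n. g n / real n) \<longlonglongrightarrow> 0) \<and>
               (\<forall>\<^sub>F n in sequentially. real (p (dd n) n) \<le> real n powr (real n + g n))))"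
  using part1 part2 by blast

end
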